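(* For all $n\ge 1$, \[\left|\mathrm{Av}_{n+2}[\overline{132},\overline{213},\overline{321}]\right|=\left|\mathcal{R}_n\right|.\]
   Context: For $\sigma\in S_m$, the cyclic permutation $[\sigma]$ is the set of all rotations of $\sigma$. $[\sigma]$ contains the totally vincular cyclic pattern $[\overline{abc}]$ (with $abc\in S_3$) if there are three cyclically consecutive entries $\sigma_i\sigma_{i+1}\sigma_{i+2}$ (indices mod $m$) order-isomorphic to $abc$; $\mathrm{Av}_m[\overline{132},\overline{213},\overline{321}]$ is the set of cyclic permutations of length $m$ containing none of these three patterns. A partial cyclic order on a set $X$ is a ternary relation $Z\subseteq X^3$ such that for all $x,y,z,u\in X$: $(x,y,z)\in Z\Rightarrow(y,z,x)\in Z$; $(x,y,z)\in Z\Rightarrow(z,y,x)\notin Z$; and $(x,y,z)\in Z$ and $(x,z,u)\in Z\Rightarrow(x,y,u)\in Z$. It is a total cyclic order if for every triple $(x,y,z)$ of distinct elements, $(x,y,z)\in Z$ or $(z,y,x)\in Z$. $\mathcal{R}_n$ is the set of total cyclic orders $Z$ on $[n+2]$ with $(i,i+1,i+2)\in Z$ for all $1\le i\le n$, $(n+1,n+2,1)\in Z$ and $(n+2,1,2)\in Z$. *)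

theory Defs
  imports Main
begin

definition perms :: "nat \<Rightarrow> nat list set" where
  "perms m = {s. distinct s \<and> set s = {1..m}}"

text \<open>The cyclic permutation [s]: the set of all rotations of s.\<close>
definition cyc :: "nat list \<Rightarrow> nat list set" where
  "cyc s = {rotate k s | k. k < length s}"

definition order_iso3 :: "nat list \<Rightarrow> nat list \<Rightarrow> bool" where
  "order_iso3 xs ps \<longleftrightarrow> length xs = 3 \<and> length ps = 3 \<and>
     (\<forall>j<3. \<forall>k<3. (xs ! j < xs ! k \<longleftrightarrow> ps ! j < ps ! k))"

text \<open>[s] contains the totally vincular cyclic pattern [overline{p}] (p in S_3):
  three cyclically consecutive entries (indices mod m) order-isomorphic to p.\<close>
definition cyc_contains :: "nat list \<Rightarrow> nat list \<Rightarrow> bool" where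
  "cyc_contains s p \<longleftrightarrow> (\<exists>i<length s.
     order_iso3 [s ! i, s ! ((i + 1) mod length s), s ! ((i + 2) mod length s)] p)"

definition Av :: "nat \<Rightarrow> nat list set set" where
  "Av m = {cyc s | s. s \<in> perms m \<and>
      \<not> cyc_contains s [1,3,2] \<and> \<not> cyc_contains s [2,1,3] \<and> \<not> cyc_contains s [3,2,1]}"

definition partial_cyclic_order :: "'a set \<Rightarrow> ('a \<times> 'a \<times> 'a) set \<Rightarrow> bool" where
  "partial_cyclic_order X Z \<longleftrightarrow> Z \<subseteq> X \<times> X \<times> X \<and>
    (\<forall>x\<in>X. \<forall>y\<in>X. \<forall>z\<in>X. \<forall>u\<in>X.
       ((x,y,z) \<in> Z \<longrightarrow> (y,z,x) \<in> Z) \<and>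
       ((x,y,z) \<in> Z \<longrightarrow> (z,y,x) \<notin> Z) \<and>
       ((x,y,z) \<in> Z \<and> (x,z,u) \<in> Z \<longrightarrow> (x,y,u) \<in> Z))"

definition total_cyclic_order :: "'a set \<Rightarrow> ('a \<times> 'a \<times> 'a) set \<Rightarrow> bool" where
  "total_cyclic_order X Z \<longleftrightarrow> partial_cyclic_order X Z \<and>
    (\<forall>x\<in>X. \<forall>y\<in>X. \<forall>z\<in>X. x \<noteq> y \<and> y \<noteq> z \<and> x \<noteq> z \<longrightarrow>
       (x,y,z) \<in> Z \<or> (z,y,x) \<in> Z)"

definition R :: "nat \<Rightarrow> (nat \<times> nat \<times> nat) set set" where
  "R n = {Z. total_cyclic_order {1..n+2} Z \<and>
      (\<forall>i. 1 \<le> i \<and> i \<le> n \<longrightarrow> (i, i+1, i+2) \<in> Z) \<and>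
      (n+1, n+2, 1) \<in> Z \<and> (n+2, 1, 2) \<in> Z}"

end

theory Submission
  imports Defs
begin

definition cyc3 :: "nat \<Rightarrow> nat \<Rightarrow> nat \<Rightarrow> bool" where
  "cyc3 x y z \<longleftrightarrow> (x<y \<and> y<z) \<or> (y<z \<and> z<x) \<or> (z<x \<and> x<y)"

definition Cgood :: "nat list \<Rightarrow> bool" where
  "Cgood s \<longleftrightarrow> (\<forall>i<length s. cyc3 (s!i) (s!((i+1) mod length s)) (s!((i+2) mod length s)))"

lemma all3: "(\<forall>j<(3::nat). P j) \<longleftrightarrow> P 0 \<and> P 1 \<and> P 2"
  by (auto simp: numeral_3_eq_3 numeral_2_eq_2 less_Suc_eq)

lemma iso3_eq: "order_iso3 [x,y,z] [p,q,r] \<longleftrightarrow>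
   (x<y \<longleftrightarrow> p<q) \<and> (y<x \<longleftrightarrow> q<p) \<and> (x<z \<longleftrightarrow> p<r) \<and> (z<x \<longleftrightarrow> r<p) \<and> (y<z \<longleftrightarrow> q<r) \<and> (z<y \<longleftrightarrow> r<q)"
  unfolding order_iso3_def all3 by auto

lemma avoid3: "x \<noteq> y \<Longrightarrow> y \<noteq> z \<Longrightarrow> x \<noteq> z \<Longrightarrow>
  (\<not> order_iso3 [x,y,z] [1,3,2] \<and> \<not> order_iso3 [x,y,z] [2,1,3] \<and> \<not> order_iso3 [x,y,z] [3,2,1])
   \<longleftrightarrow> cyc3 x y z"
  unfolding iso3_eq cyc3_def by auto

lemma idx_distinct:
  fixes L i :: nat
  assumes "3 \<le> L" "i < L"
  shows "i \<noteq> (i+1) mod L" "i \<noteq> (i+2) mod L" "(i+1) mod L \<noteq> (i+2) mod L"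
    "(i+1) mod L < L" "(i+2) mod L < L"
proof -
  have L: "L > 0" using assms by simp
  show "(i+1) mod L < L" "(i+2) mod L < L" using L by auto
  show "i \<noteq> (i+1) mod L" "i \<noteq> (i+2) mod L" "(i+1) mod L \<noteq> (i+2) mod L"
    using assms by (auto simp: mod_if split: if_splits)
qed

lemma avoid_Cgood:
  assumes "3 \<le> length s" "distinct s"
  shows "(\<not> cyc_contains s [1,3,2] \<and> \<not> cyc_contains s [2,1,3] \<and> \<not> cyc_contains s [3,2,1])
     \<longleftrightarrow> Cgood s"
proof -
  have "\<And>i. i < length s \<Longrightarrow> (\<not> order_iso3 [s!i, s!((i+1) mod length s), s!((i+2) mod length s)] [1,3,2] \<and>
      \<not> order_iso3 [s!i, s!((i+1) mod length s), s!((i+2) mod length s)] [2,1,3] \<and>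
      \<not> order_iso3 [s!i, s!((i+1) mod length s), s!((i+2) mod length s)] [3,2,1])
     \<longleftrightarrow> cyc3 (s!i) (s!((i+1) mod length s)) (s!((i+2) mod length s))"
  proof -
    fix i assume i: "i < length s"
    note d = idx_distinct[OF assms(1) i]
    show "?thesis i"
      apply (rule avoid3)
      using d i assms(2) by (simp_all add: nth_eq_iff_index_eq)
  qed
  then show ?thesis unfolding cyc_contains_def Cgood_def by blast
qed


section \<open>Rotations\<close>

lemma cyc_rotate:
  assumes "s \<noteq> []"
  shows "cyc (rotate k s) = cyc s"
proof -
  let ?L = "length s"
  have L: "?L > 0" using assms by simp
  show ?thesis
  proof
    show "cyc (rotate k s) \<subseteq> cyc s"
    proof
      fix t assume "t \<in> cyc (rotate k s)"
      then obtain j where t: "t = rotate j (rotate k s)" by (auto simp: cyc_def)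
      then have "t = rotate ((j + k) mod ?L) s"
        by (simp add: rotate_rotate rotate_conv_mod[symmetric])
      then show "t \<in> cyc s" using L unfolding cyc_def by auto
    qed
  next
    show "cyc s \<subseteq> cyc (rotate k s)"
    proof
      fix t assume "t \<in> cyc s"
      then obtain j where t: "t = rotate j s" and j: "j < ?L" by (auto simp: cyc_def)
      define j' where "j' = (j + ?L - k mod ?L) mod ?L"
      have "(j' + k) mod ?L = j"
      proof -
        have "(j' + k) mod ?L = ((j + ?L - k mod ?L) + k) mod ?L"
          unfolding j'_def by (simp add: mod_add_left_eq)
        also have "\<dots> = ((j + ?L - k mod ?L) + k mod ?L) mod ?L"
          by (simp add: mod_add_right_eq)
        also have "\<dots> = (j + ?L) mod ?L" using L
          by (metis add.commute le_add2 le_trans less_imp_le_nat mod_less_divisor le_add_diff_inverse)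
        also have "\<dots> = j" using j by simp
        finally show ?thesis .
      qed
      then have "t = rotate j' (rotate k s)"
        using t by (metis rotate_rotate rotate_conv_mod)
      moreover have "j' < length (rotate k s)" using L by (simp add: j'_def)
      ultimately show "t \<in> cyc (rotate k s)" unfolding cyc_def by blast
    qed
  qed
qed

lemma cyc_contains_rotate:
  assumes "cyc_contains (rotate k s) p"
  shows "cyc_contains s p"
proof -
  let ?L = "length s"
  from assms obtain i where i: "i < ?L" and
    o: "order_iso3 [rotate k s ! i, rotate k s ! ((i + 1) mod ?L), rotate k s ! ((i + 2) mod ?L)] p"
    unfolding cyc_contains_def by auto
  have L: "?L > 0" using i by (cases s) auto
  have e0: "rotate k s ! i = s ! ((k + i) mod ?L)" using i by (simp add: nth_rotate)
  have e: "rotate k s ! ((i + c) mod ?L) = s ! (((k + i) mod ?L + c) mod ?L)" for c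
  proof -
    have "rotate k s ! ((i + c) mod ?L) = s ! ((k + (i + c) mod ?L) mod ?L)"
      using L by (simp add: nth_rotate)
    also have "(k + (i + c) mod ?L) mod ?L = (k + (i + c)) mod ?L" by (simp add: mod_add_right_eq)
    also have "\<dots> = ((k + i) mod ?L + c) mod ?L" by (simp add: mod_add_left_eq add.assoc)
    finally show ?thesis .
  qed
  note e1 = e[of 1] and e2 = e[of 2]
  show ?thesis unfolding cyc_contains_def
    apply (rule exI[of _ "(k + i) mod ?L"])
    using o L e0 e1 e2 by simp
qed

definition T :: "nat \<Rightarrow> nat list set" where
  "T m = {s. s \<in> perms m \<and> s ! 0 = 1 \<and>
      \<not> cyc_contains s [1,3,2] \<and> \<not> cyc_contains s [2,1,3] \<and> \<not> cyc_contains s [3,2,1]}"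

lemma perms_length: assumes "s \<in> perms m" shows "length s = m"
proof -
  have d: "distinct s" and st: "set s = {1..m}" using assms by (auto simp: perms_def)
  have "card (set s) = length s" using d by (rule distinct_card)
  then show ?thesis using st by simp
qed

lemma part1:
  assumes "m \<ge> 1"
  shows "bij_betw cyc (T m) (Av m)"
  unfolding bij_betw_def
proof (intro conjI)
  show "inj_on cyc (T m)"
  proof (rule inj_onI)
    fix s t assume s: "s \<in> T m" and t: "t \<in> T m" and e: "cyc s = cyc t"
    have ls: "length s = m" and lt: "length t = m"
      using s t perms_length unfolding T_def by auto
    have "t \<in> cyc t" unfolding cyc_def using lt assms
      by (intro CollectI exI[of _ 0]) simp
    then have "t \<in> cyc s" using e by simp
    then obtain k where k: "k < m" and tk: "t = rotate k s" using ls unfolding cyc_def by blast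
    have "t ! 0 = s ! k" using tk k ls assms by (simp add: nth_rotate)
    moreover have "t ! 0 = 1" "s ! 0 = 1" using s t unfolding T_def by auto
    moreover have "distinct s" using s unfolding T_def perms_def by auto
    ultimately have sk: "s ! k = s ! 0" by simp
    have "(s ! k = s ! 0) = (k = 0)"
      by (rule nth_eq_iff_index_eq) (use \<open>distinct s\<close> k ls assms in auto)
    then have "k = 0" using sk by blast
    then show "s = t" using tk by simp
  qed
next
  show "cyc ` T m = Av m"
  proof
    show "cyc ` T m \<subseteq> Av m"
    proof
      fix C assume "C \<in> cyc ` T m"
      then obtain s where C: "C = cyc s" and s: "s \<in> T m" by blast
      have "s \<in> perms m \<and> \<not> cyc_contains s [1,3,2] \<and> \<not> cyc_contains s [2,1,3] \<and> \<not> cyc_contains s [3,2,1]"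
        using s unfolding T_def by simp
      then show "C \<in> Av m" unfolding Av_def C by (intro CollectI exI[of _ s]) simp
    qed
  next
    show "Av m \<subseteq> cyc ` T m"
    proof
      fix C assume "C \<in> Av m"
      then obtain s where C: "C = cyc s" and s: "s \<in> perms m"
        and a: "\<not> cyc_contains s [1,3,2]" "\<not> cyc_contains s [2,1,3]" "\<not> cyc_contains s [3,2,1]"
        unfolding Av_def by auto
      have ls: "length s = m" using s perms_length by auto
      have "1 \<in> set s" using s assms unfolding perms_def by auto
      then obtain k where k: "k < m" "s ! k = 1" using ls by (auto simp: in_set_conv_nth)
      let ?t = "rotate k s"
      have "?t \<in> perms m" using s by (simp add: perms_def)
      moreover have "?t ! 0 = 1" using k ls assms by (simp add: nth_rotate)
      moreover have "\<not> cyc_contains ?t [1,3,2]" "\<not> cyc_contains ?t [2,1,3]" "\<not> cyc_contains ?t [3,2,1]"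
        using a cyc_contains_rotate by blast+
      ultimately have "?t \<in> T m" unfolding T_def by blast
      moreover have "s \<noteq> []" using ls assms by auto
      then have "cyc ?t = C" using C cyc_rotate by simp
      ultimately show "C \<in> cyc ` T m" by blast
    qed
  qed
qed


section \<open>Cyclic orders\<close>

lemma tco_sub: "total_cyclic_order X Z \<Longrightarrow> (a,b,c) \<in> Z \<Longrightarrow> a \<in> X \<and> b \<in> X \<and> c \<in> X"
  unfolding total_cyclic_order_def partial_cyclic_order_def by blast

lemma tco_cyc: "total_cyclic_order X Z \<Longrightarrow> (a,b,c) \<in> Z \<Longrightarrow> (b,c,a) \<in> Z"
  unfolding total_cyclic_order_def partial_cyclic_order_def by blast

lemma tco_asym: "total_cyclic_order X Z \<Longrightarrow> (a,b,c) \<in> Z \<Longrightarrow> (c,b,a) \<notin> Z"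
  unfolding total_cyclic_order_def partial_cyclic_order_def by blast

lemma tco_trans: "total_cyclic_order X Z \<Longrightarrow> (x,y,z) \<in> Z \<Longrightarrow> (x,z,u) \<in> Z \<Longrightarrow> (x,y,u) \<in> Z"
  unfolding total_cyclic_order_def partial_cyclic_order_def by blast

lemma tco_tot: "total_cyclic_order X Z \<Longrightarrow> a \<in> X \<Longrightarrow> b \<in> X \<Longrightarrow> c \<in> X \<Longrightarrow>
   a \<noteq> b \<Longrightarrow> b \<noteq> c \<Longrightarrow> a \<noteq> c \<Longrightarrow> (a,b,c) \<in> Z \<or> (c,b,a) \<in> Z"
  unfolding total_cyclic_order_def by blast

lemma tco_dist:
  assumes Z: "total_cyclic_order X Z" and m: "(a,b,c) \<in> Z"
  shows "a \<noteq> b \<and> b \<noteq> c \<and> a \<noteq> c"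
proof (intro conjI notI)
  assume "a = b"
  then have "(c,b,a) \<in> Z" using m tco_cyc[OF Z] by metis
  then show False using m tco_asym[OF Z] by blast
next
  assume "b = c"
  then have "(c,b,a) \<in> Z" using m tco_cyc[OF Z] by metis
  then show False using m tco_asym[OF Z] by blast
next
  assume "a = c"
  then show False using m tco_asym[OF Z] by blast
qed

lemma tco_A:
  assumes Z: "total_cyclic_order X Z" and h1: "(p,a,b) \<in> Z" and h2: "(p,b,c) \<in> Z"
  shows "(a,b,c) \<in> Z"
proof (rule ccontr)
  assume n: "(a,b,c) \<notin> Z"
  have X: "p \<in> X" "a \<in> X" "b \<in> X" "c \<in> X" using tco_sub[OF Z h1] tco_sub[OF Z h2] by auto
  have pac: "(p,a,c) \<in> Z" using tco_trans[OF Z h1 h2] .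
  have d: "a \<noteq> b" "b \<noteq> c" "a \<noteq> c" using tco_dist[OF Z h1] tco_dist[OF Z h2] tco_dist[OF Z pac] by auto
  have "(c,b,a) \<in> Z" using tco_tot[OF Z X(2,3,4) d] n by blast
  then have bac: "(b,a,c) \<in> Z" using tco_cyc[OF Z] by blast
  have bcp: "(b,c,p) \<in> Z" using tco_cyc[OF Z h2] .
  have "(b,a,p) \<in> Z" using tco_trans[OF Z bac bcp] .
  then show False using tco_asym[OF Z h1] by blast
qed

lemma tco_det:
  assumes Z: "total_cyclic_order X Z" and X: "p \<in> X" "a \<in> X" "b \<in> X" "c \<in> X"
    and np: "a \<noteq> p" "b \<noteq> p" "c \<noteq> p"
  shows "(a,b,c) \<in> Z \<longleftrightarrow> a \<noteq> b \<and> b \<noteq> c \<and> a \<noteq> c \<and>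
     (((p,a,b) \<in> Z \<and> (p,b,c) \<in> Z) \<or> ((p,b,c) \<in> Z \<and> (p,c,a) \<in> Z) \<or> ((p,c,a) \<in> Z \<and> (p,a,b) \<in> Z))"
proof
  assume m: "(a,b,c) \<in> Z"
  have d: "a \<noteq> b" "b \<noteq> c" "a \<noteq> c" using tco_dist[OF Z m] by auto
  have t1: "(p,a,b) \<in> Z \<or> (p,b,a) \<in> Z" using tco_tot[OF Z X(1,2,3)] np d tco_cyc[OF Z] by metis
  have t2: "(p,b,c) \<in> Z \<or> (p,c,b) \<in> Z" using tco_tot[OF Z X(1,3,4)] np d tco_cyc[OF Z] by metis
  have t3: "(p,c,a) \<in> Z \<or> (p,a,c) \<in> Z" using tco_tot[OF Z X(1,4,2)] np d tco_cyc[OF Z] by metis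
  have ncba: "(c,b,a) \<notin> Z" using tco_asym[OF Z m] .
  have r1: "(p,c,b) \<in> Z \<Longrightarrow> (p,b,a) \<in> Z \<Longrightarrow> False" using tco_A[OF Z] ncba by blast
  have r2: "(p,a,c) \<in> Z \<Longrightarrow> (p,c,b) \<in> Z \<Longrightarrow> False" using tco_A[OF Z] ncba tco_cyc[OF Z] by metis
  have r3: "(p,b,a) \<in> Z \<Longrightarrow> (p,a,c) \<in> Z \<Longrightarrow> False" using tco_A[OF Z] ncba tco_cyc[OF Z] by metis
  show "a \<noteq> b \<and> b \<noteq> c \<and> a \<noteq> c \<and>
     (((p,a,b) \<in> Z \<and> (p,b,c) \<in> Z) \<or> ((p,b,c) \<in> Z \<and> (p,c,a) \<in> Z) \<or> ((p,c,a) \<in> Z \<and> (p,a,b) \<in> Z))"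
    using d t1 t2 t3 r1 r2 r3 by blast
next
  assume h: "a \<noteq> b \<and> b \<noteq> c \<and> a \<noteq> c \<and>
     (((p,a,b) \<in> Z \<and> (p,b,c) \<in> Z) \<or> ((p,b,c) \<in> Z \<and> (p,c,a) \<in> Z) \<or> ((p,c,a) \<in> Z \<and> (p,a,b) \<in> Z))"
  then consider "(p,a,b) \<in> Z" "(p,b,c) \<in> Z" | "(p,b,c) \<in> Z" "(p,c,a) \<in> Z" | "(p,c,a) \<in> Z" "(p,a,b) \<in> Z"
    by blast
  then show "(a,b,c) \<in> Z"
  proof cases
    case 1 then show ?thesis using tco_A[OF Z] by blast
  next
    case 2 then have "(b,c,a) \<in> Z" using tco_A[OF Z] by blast
    then show ?thesis using tco_cyc[OF Z] by blast
  next
    case 3 then have "(c,a,b) \<in> Z" using tco_A[OF Z] by blast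
    then show ?thesis using tco_cyc[OF Z] by blast
  qed
qed

lemma tco_agree:
  assumes Z1: "total_cyclic_order X Z1" and Z2: "total_cyclic_order X Z2" and p: "p \<in> X"
    and ag: "\<And>b c. (p,b,c) \<in> Z1 \<longleftrightarrow> (p,b,c) \<in> Z2"
  shows "Z1 = Z2"
proof -
  have key: "(a,b,c) \<in> Z1 \<longleftrightarrow> (a,b,c) \<in> Z2" for a b c
  proof (cases "a \<in> X \<and> b \<in> X \<and> c \<in> X")
    case False
    then show ?thesis using tco_sub[OF Z1] tco_sub[OF Z2] by blast
  next
    case True
    have c1: "(x,y,z) \<in> Z1 \<longleftrightarrow> (y,z,x) \<in> Z1" for x y z using tco_cyc[OF Z1] by blast
    have c2: "(x,y,z) \<in> Z2 \<longleftrightarrow> (y,z,x) \<in> Z2" for x y z using tco_cyc[OF Z2] by blast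
    show ?thesis
    proof (cases "a = p \<or> b = p \<or> c = p")
      case True
      then show ?thesis using ag c1 c2 by metis
    next
      case False
      then show ?thesis using tco_det[OF Z1 p] tco_det[OF Z2 p] True ag by simp
    qed
  qed
  show ?thesis
  proof (rule set_eqI)
    fix x :: "'a \<times> 'a \<times> 'a"
    obtain a b c where "x = (a,b,c)" by (cases x) auto
    then show "x \<in> Z1 \<longleftrightarrow> x \<in> Z2" using key by simp
  qed
qed

definition Zg :: "nat set \<Rightarrow> (nat \<Rightarrow> nat) \<Rightarrow> (nat \<times> nat \<times> nat) set" where
  "Zg X f = {(a,b,c). a \<in> X \<and> b \<in> X \<and> c \<in> X \<and> cyc3 (f a) (f b) (f c)}"

lemma Zg_tco:
  assumes inj: "inj_on f X"
  shows "total_cyclic_order X (Zg X f)"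
  unfolding total_cyclic_order_def partial_cyclic_order_def
proof (intro conjI ballI impI)
  show "Zg X f \<subseteq> X \<times> X \<times> X" unfolding Zg_def by auto
next
  fix x y z u assume "x \<in> X" "y \<in> X" "z \<in> X" "u \<in> X"
  show "(x,y,z) \<in> Zg X f \<Longrightarrow> (y,z,x) \<in> Zg X f" unfolding Zg_def cyc3_def by auto
  show "(x,y,z) \<in> Zg X f \<Longrightarrow> (z,y,x) \<notin> Zg X f" unfolding Zg_def cyc3_def by auto
  show "(x,y,z) \<in> Zg X f \<and> (x,z,u) \<in> Zg X f \<Longrightarrow> (x,y,u) \<in> Zg X f"
    unfolding Zg_def cyc3_def by auto
next
  fix x y z assume X: "x \<in> X" "y \<in> X" "z \<in> X" and d: "x \<noteq> y \<and> y \<noteq> z \<and> x \<noteq> z"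
  have "f x \<noteq> f y" "f y \<noteq> f z" "f x \<noteq> f z" using d X inj by (auto dest: inj_onD)
  then show "(x,y,z) \<in> Zg X f \<or> (z,y,x) \<in> Zg X f" using X unfolding Zg_def cyc3_def by auto
qed


definition Zf :: "nat \<Rightarrow> nat list \<Rightarrow> (nat \<times> nat \<times> nat) set" where
  "Zf m s = Zg {1..m} (\<lambda>a. s ! (a - 1))"

lemma perm_fun:
  assumes "s \<in> perms m"
  shows "inj_on (\<lambda>a. s ! (a - 1)) {1..m}" "(\<lambda>a. s ! (a - 1)) ` {1..m} = {1..m}"
proof -
  have d: "distinct s" and st: "set s = {1..m}" using assms by (auto simp: perms_def)
  have ls: "length s = m" using perms_length[OF assms] .
  show "inj_on (\<lambda>a. s ! (a - 1)) {1..m}"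
  proof (rule inj_onI)
    fix a b assume a: "a \<in> {1..m}" and b: "b \<in> {1..m}" and e: "s ! (a - 1) = s ! (b - 1)"
    have "(s ! (a - 1) = s ! (b - 1)) = (a - 1 = b - 1)"
      by (rule nth_eq_iff_index_eq) (use d a b ls in auto)
    then show "a = b" using e a b by auto
  qed
  show "(\<lambda>a. s ! (a - 1)) ` {1..m} = {1..m}"
  proof
    show "(\<lambda>a. s ! (a - 1)) ` {1..m} \<subseteq> {1..m}"
    proof
      fix v assume "v \<in> (\<lambda>a. s ! (a - 1)) ` {1..m}"
      then obtain a where a: "a \<in> {1..m}" and v: "v = s ! (a - 1)" by blast
      have "a - 1 < length s" using a ls by auto
      then have "v \<in> set s" using v by simp
      then show "v \<in> {1..m}" using st by simp
    qed
  next
    show "{1..m} \<subseteq> (\<lambda>a. s ! (a - 1)) ` {1..m}"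
    proof
      fix v assume "v \<in> {1..m}"
      then have "v \<in> set s" using st by simp
      then obtain i where i: "i < m" "v = s ! i" using ls by (auto simp: in_set_conv_nth)
      then have "v = s ! (Suc i - 1)" "Suc i \<in> {1..m}" by auto
      then show "v \<in> (\<lambda>a. s ! (a - 1)) ` {1..m}" by blast
    qed
  qed
qed

lemma Zf_mem: "(a,b,c) \<in> Zf m s \<longleftrightarrow> a \<in> {1..m} \<and> b \<in> {1..m} \<and> c \<in> {1..m} \<and>
   cyc3 (s ! (a - 1)) (s ! (b - 1)) (s ! (c - 1))"
  unfolding Zf_def Zg_def by simp

lemma Rcond:
  assumes n: "n \<ge> 1" and ls: "length s = n + 2"
  shows "((\<forall>i. 1 \<le> i \<and> i \<le> n \<longrightarrow> (i, i+1, i+2) \<in> Zf (n+2) s) \<and>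
      (n+1, n+2, 1) \<in> Zf (n+2) s \<and> (n+2, 1, 2) \<in> Zf (n+2) s) \<longleftrightarrow> Cgood s"
proof -
  let ?m = "n + 2"
  have m1a: "(n+1+2) mod ?m = 1"
  proof -
    have "n+1+2 = 1 + ?m" by simp
    then have "(n+1+2) mod ?m = (1 + ?m) mod ?m" by (rule arg_cong)
    also have "\<dots> = 1 mod ?m" by (rule mod_add_self2)
    also have "\<dots> = 1" using n by simp
    finally show ?thesis .
  qed
  have m1: "(n+1) mod ?m = n+1" "(n+2) mod ?m = 0" "(n+1+2) mod ?m = 1" using n m1a by auto
  have q: "(\<forall>i. 1 \<le> i \<and> i \<le> n \<longrightarrow> (i, i+1, i+2) \<in> Zf ?m s) \<longleftrightarrow>
     (\<forall>j<n. cyc3 (s!j) (s!(j+1)) (s!(j+2)))"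
  proof
    assume h: "\<forall>i. 1 \<le> i \<and> i \<le> n \<longrightarrow> (i, i+1, i+2) \<in> Zf ?m s"
    show "\<forall>j<n. cyc3 (s!j) (s!(j+1)) (s!(j+2))"
    proof (intro allI impI)
      fix j assume "j < n"
      then have "(j+1, j+2, j+3) \<in> Zf ?m s" using h by (metis Suc_eq_plus1 add_Suc_right le_add2 less_eq_Suc_le numeral_2_eq_2 numeral_3_eq_3 one_add_one)
      then show "cyc3 (s!j) (s!(j+1)) (s!(j+2))" by (simp add: Zf_mem)
    qed
  next
    assume h: "\<forall>j<n. cyc3 (s!j) (s!(j+1)) (s!(j+2))"
    show "\<forall>i. 1 \<le> i \<and> i \<le> n \<longrightarrow> (i, i+1, i+2) \<in> Zf ?m s"
    proof (intro allI impI)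
      fix i assume i: "1 \<le> i \<and> i \<le> n"
      then have "i - 1 < n" by auto
      then have "cyc3 (s!(i-1)) (s!(i-1+1)) (s!(i-1+2))" using h by blast
      moreover have "i-1+1 = i" "i-1+2 = i+1" using i by auto
      ultimately show "(i, i+1, i+2) \<in> Zf ?m s" using i by (simp add: Zf_mem)
    qed
  qed
  have e1: "(n+1, n+2, 1) \<in> Zf ?m s \<longleftrightarrow> cyc3 (s!n) (s!(n+1)) (s!0)" by (simp add: Zf_mem)
  have e2: "(n+2, 1, 2) \<in> Zf ?m s \<longleftrightarrow> cyc3 (s!(n+1)) (s!0) (s!1)" by (simp add: Zf_mem)
  have c: "Cgood s \<longleftrightarrow> (\<forall>j<n. cyc3 (s!j) (s!(j+1)) (s!(j+2))) \<and>
     cyc3 (s!n) (s!(n+1)) (s!0) \<and> cyc3 (s!(n+1)) (s!0) (s!1)"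
  proof -
    have "Cgood s \<longleftrightarrow> (\<forall>j<n+2. cyc3 (s!j) (s!((j+1) mod ?m)) (s!((j+2) mod ?m)))"
      unfolding Cgood_def ls ..
    also have "\<dots> \<longleftrightarrow> (\<forall>j<n. cyc3 (s!j) (s!((j+1) mod ?m)) (s!((j+2) mod ?m))) \<and>
        cyc3 (s!n) (s!((n+1) mod ?m)) (s!((n+2) mod ?m)) \<and>
        cyc3 (s!(n+1)) (s!((n+1+1) mod ?m)) (s!((n+1+2) mod ?m))"
      by (auto simp: less_Suc_eq)
    also have "\<dots> \<longleftrightarrow> (\<forall>j<n. cyc3 (s!j) (s!(j+1)) (s!(j+2))) \<and>
     cyc3 (s!n) (s!(n+1)) (s!0) \<and> cyc3 (s!(n+1)) (s!0) (s!1)"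
    proof -
      have "\<forall>j<n. (j+1) mod ?m = j+1 \<and> (j+2) mod ?m = j+2" by auto
      moreover have "(n+1+1) mod ?m = 0" by simp
      ultimately show ?thesis using m1 by (metis (no_types, lifting))
    qed
    finally show ?thesis .
  qed
  show ?thesis using q e1 e2 c by blast
qed


lemma T_to_R:
  assumes n: "n \<ge> 1" and s: "s \<in> T (n+2)"
  shows "Zf (n+2) s \<in> R n"
proof -
  have sp: "s \<in> perms (n+2)" and a: "\<not> cyc_contains s [1,3,2]" "\<not> cyc_contains s [2,1,3]" "\<not> cyc_contains s [3,2,1]"
    using s unfolding T_def by auto
  have ls: "length s = n+2" using perms_length[OF sp] .
  have d: "distinct s" using sp by (simp add: perms_def)
  have "Cgood s" using avoid_Cgood[of s] ls d a n by simp
  then have c: "(\<forall>i. 1 \<le> i \<and> i \<le> n \<longrightarrow> (i, i+1, i+2) \<in> Zf (n+2) s) \<and>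
      (n+1, n+2, 1) \<in> Zf (n+2) s \<and> (n+2, 1, 2) \<in> Zf (n+2) s" using Rcond[OF n ls] by blast
  have "total_cyclic_order {1..n+2} (Zf (n+2) s)"
    unfolding Zf_def by (rule Zg_tco[OF perm_fun(1)[OF sp]])
  then show ?thesis using c unfolding R_def by blast
qed

lemma recover:
  assumes s: "s \<in> perms m" and s0: "s ! 0 = 1" and a: "a \<in> {1..m}"
  shows "s ! (a - 1) = (if a = 1 then 1 else card {b \<in> {1..m}. (1,b,a) \<in> Zf m s} + 2)"
proof (cases "a = 1")
  case True
  then show ?thesis using s0 by simp
next
  case False
  define f where "f = (\<lambda>a. s ! (a - 1))"
  let ?X = "{1..m::nat}"
  have inj: "inj_on f ?X" unfolding f_def by (rule perm_fun(1)[OF s])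
  have img: "f ` ?X = ?X" unfolding f_def by (rule perm_fun(2)[OF s])
  have fX: "b \<in> ?X \<Longrightarrow> f b \<in> ?X" for b using img by blast
  have fa: "f a \<in> ?X" using fX a .
  have f1: "f 1 = 1" using s0 by (simp add: f_def)
  have one: "1 \<in> ?X" using a by auto
  have fa1: "f a \<noteq> 1" using inj False a one f1 by (metis inj_onD)
  have fb1: "b \<in> ?X \<Longrightarrow> b \<noteq> 1 \<Longrightarrow> f b \<noteq> 1" for b using inj one f1 by (metis inj_onD)
  have zf: "(1,b,a) \<in> Zf m s \<longleftrightarrow> b \<in> ?X \<and> cyc3 1 (f b) (f a)" for b
    using a one f1 by (simp add: Zf_mem f_def)
  have S: "{b \<in> ?X. f b < f a} = insert 1 {b \<in> ?X. (1,b,a) \<in> Zf m s}"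
  proof (rule set_eqI)
    fix b
    show "b \<in> {b \<in> ?X. f b < f a} \<longleftrightarrow> b \<in> insert 1 {b \<in> ?X. (1,b,a) \<in> Zf m s}"
    proof (cases "b = 1")
      case True
      then show ?thesis using f1 fa fa1 one by auto
    next
      case bn: False
      show ?thesis
      proof (cases "b \<in> ?X")
        case True
        then have "f b \<in> ?X" "f b \<noteq> 1" using fX fb1 bn by auto
        then show ?thesis using True bn zf[of b] fa by (auto simp: cyc3_def)
      next
        case False
        then show ?thesis using bn zf[of b] by auto
      qed
    qed
  qed
  have "(1,1,a) \<notin> Zf m s" unfolding Zf_mem cyc3_def by auto
  then have notin: "1 \<notin> {b \<in> ?X. (1,b,a) \<in> Zf m s}" by simp
  have C1: "card {b \<in> ?X. f b < f a} = f a - 1"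
  proof -
    have "f ` {b \<in> ?X. f b < f a} = {1..<f a}"
    proof
      show "f ` {b \<in> ?X. f b < f a} \<subseteq> {1..<f a}"
      proof
        fix v assume "v \<in> f ` {b \<in> ?X. f b < f a}"
        then obtain b where b: "b \<in> ?X" "f b < f a" "v = f b" by blast
        have "f b \<in> ?X" using fX[OF b(1)] .
        then show "v \<in> {1..<f a}" using b by simp
      qed
    next
      show "{1..<f a} \<subseteq> f ` {b \<in> ?X. f b < f a}"
      proof
        fix v assume v: "v \<in> {1..<f a}"
        then have "v \<in> ?X" using fa by auto
        then obtain b where "b \<in> ?X" "v = f b" using img by blast
        then show "v \<in> f ` {b \<in> ?X. f b < f a}" using v by auto
      qed
    qed
    moreover have "inj_on f {b \<in> ?X. f b < f a}" using inj by (rule inj_on_subset) auto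
    then have "card (f ` {b \<in> ?X. f b < f a}) = card {b \<in> ?X. f b < f a}" by (rule card_image)
    ultimately show ?thesis by simp
  qed
  have fin: "finite {b \<in> ?X. (1,b,a) \<in> Zf m s}" by simp
  have "card {b \<in> ?X. f b < f a} = card {b \<in> ?X. (1,b,a) \<in> Zf m s} + 1"
    using S notin fin by simp
  then have "f a = card {b \<in> ?X. (1,b,a) \<in> Zf m s} + 2" using C1 fa fa1 by auto
  then show ?thesis using False by (simp add: f_def)
qed

lemma inj2: "inj_on (Zf m) (T m)"
proof (rule inj_onI)
  fix s t assume s: "s \<in> T m" and t: "t \<in> T m" and e: "Zf m s = Zf m t"
  have sp: "s \<in> perms m" "s ! 0 = 1" and tp: "t \<in> perms m" "t ! 0 = 1" using s t unfolding T_def by auto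
  have ls: "length s = m" and lt: "length t = m" using sp tp perms_length by auto
  show "s = t"
  proof (rule nth_equalityI)
    show "length s = length t" using ls lt by simp
  next
    fix i assume "i < length s"
    then have a: "Suc i \<in> {1..m}" using ls by auto
    have "s ! (Suc i - 1) = t ! (Suc i - 1)"
      using recover[OF sp a] recover[OF tp a] e by simp
    then show "s ! i = t ! i" by simp
  qed
qed


declare upt_Suc[simp del]

lemma surj2:
  assumes n: "n \<ge> 1" and ZR: "Z \<in> R n"
  shows "\<exists>s \<in> T (n+2). Zf (n+2) s = Z"
proof -
  let ?m = "n + 2"
  let ?X = "{1..n+2}"
  let ?Y = "?X - {1}"
  have Zt: "total_cyclic_order ?X Z" using ZR unfolding R_def by blast
  have one: "(1::nat) \<in> ?X" by simp
  define r where "r a = card {b \<in> ?X. (1,b,a) \<in> Z}" for a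
  define f where "f a = (if a = 1 then 1 else r a + 2)" for a
  have mono: "r b < r c" if "(1,b,c) \<in> Z" for b c
  proof -
    have sub: "{x \<in> ?X. (1,x,b) \<in> Z} \<subseteq> {x \<in> ?X. (1,x,c) \<in> Z}"
      using tco_trans[OF Zt _ that] by blast
    have "b \<in> {x \<in> ?X. (1,x,c) \<in> Z}" using that tco_sub[OF Zt that] by blast
    moreover have "b \<notin> {x \<in> ?X. (1,x,b) \<in> Z}" using tco_dist[OF Zt] by blast
    ultimately have "{x \<in> ?X. (1,x,b) \<in> Z} \<subset> {x \<in> ?X. (1,x,c) \<in> Z}" using sub by blast
    then show ?thesis unfolding r_def by (rule psubset_card_mono[rotated]) simp
  qed
  have key: "(1,b,c) \<in> Z \<longleftrightarrow> r b < r c" if b: "b \<in> ?Y" and c: "c \<in> ?Y" for b c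
  proof
    assume "(1,b,c) \<in> Z" then show "r b < r c" by (rule mono)
  next
    assume lt: "r b < r c"
    show "(1,b,c) \<in> Z"
    proof (rule ccontr)
      assume nz: "(1,b,c) \<notin> Z"
      have "b \<noteq> c" using lt by auto
      then have "(1,b,c) \<in> Z \<or> (c,b,1) \<in> Z" using tco_tot[OF Zt one] b c by auto
      then have "(c,b,1) \<in> Z" using nz by blast
      then have "(1,c,b) \<in> Z" using tco_cyc[OF Zt] by blast
      then have "r c < r b" by (rule mono)
      then show False using lt by simp
    qed
  qed
  have rb: "r a \<le> n" if a: "a \<in> ?Y" for a
  proof -
    have "{b \<in> ?X. (1,b,a) \<in> Z} \<subseteq> ?Y - {a}" using tco_dist[OF Zt] by blast
    then have "r a \<le> card (?Y - {a})" unfolding r_def by (intro card_mono) auto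
    also have "card (?Y - {a}) = n" using a by simp
    finally show ?thesis .
  qed
  have injf: "inj_on f ?X"
  proof (rule inj_onI)
    fix a b assume a: "a \<in> ?X" and b: "b \<in> ?X" and e: "f a = f b"
    show "a = b"
    proof (cases "a = 1 \<or> b = 1")
      case True
      have fa: "f a = (if a = 1 then 1 else r a + 2)" "f b = (if b = 1 then 1 else r b + 2)"
        by (simp_all only: f_def)
      show ?thesis
      proof (cases "a = 1")
        case True
        then have "f b = 1" using e fa by simp
        then have "b = 1" using fa(2) by (cases "b = 1") simp_all
        then show ?thesis using True by simp
      next
        case False
        then have "b = 1" using \<open>a = 1 \<or> b = 1\<close> by simp
        then have "f a = 1" using e fa by simp
        then have "a = 1" using fa(1) by (cases "a = 1") simp_all
        then show ?thesis using False by simp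
      qed
    next
      case False
      then have ab: "a \<in> ?Y" "b \<in> ?Y" using a b by auto
      have "r a = r b" using e False by (simp add: f_def)
      then have "\<not> (1,a,b) \<in> Z" "\<not> (1,b,a) \<in> Z" using key[OF ab] key[OF ab(2,1)] by auto
      then show ?thesis using tco_tot[OF Zt one a b] False tco_cyc[OF Zt] by blast
    qed
  qed
  have fsub: "f ` ?X \<subseteq> ?X"
  proof
    fix v assume "v \<in> f ` ?X"
    then obtain a where a: "a \<in> ?X" and v: "v = f a" by blast
    show "v \<in> ?X"
    proof (cases "a = 1")
      case True then show ?thesis using v by (simp add: f_def)
    next
      case False
      then have "r a \<le> n" using rb a by simp
      then show ?thesis using v False by (simp add: f_def)
    qed
  qed
  have fimg: "f ` ?X = ?X" by (rule endo_inj_surj[OF _ fsub injf]) simp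
  define s where "s = map f [1..<?m+1]"
  have ls: "length s = ?m" by (simp add: s_def)
  have sn: "s ! (a - 1) = f a" if "a \<in> ?X" for a
  proof -
    have "length [1..<?m+1] = ?m + 1 - 1" by (rule length_upt)
    moreover have "a - 1 < ?m" using that by auto
    ultimately have i: "a - 1 < length [1..<?m+1]" by simp
    have "s ! (a - 1) = f ([1..<?m+1] ! (a - 1))" unfolding s_def by (rule nth_map[OF i])
    also have "[1..<?m+1] ! (a - 1) = 1 + (a - 1)" by (rule nth_upt) (use that in simp)
    also have "1 + (a - 1) = a" using that by simp
    finally show ?thesis .
  qed
  have setu: "set [1..<?m+1] = ?X" by auto
  have sp: "s \<in> perms ?m"
    unfolding perms_def s_def using injf fimg setu by (simp add: distinct_map)
  have s0: "s ! 0 = 1" using sn[of 1] by (simp add: f_def)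
  have Zfeq: "Zf ?m s = Zg ?X f"
    unfolding Zf_def Zg_def using sn by auto
  have Zfe: "Zf ?m s = Z"
  proof -
    have "Zg ?X f = Z"
    proof (rule tco_agree[OF Zg_tco[OF injf] Zt one])
      fix b c
      show "(1,b,c) \<in> Zg ?X f \<longleftrightarrow> (1,b,c) \<in> Z"
      proof (cases "b \<in> ?Y \<and> c \<in> ?Y")
        case True
        then have "(1,b,c) \<in> Zg ?X f \<longleftrightarrow> r b < r c" unfolding Zg_def cyc3_def f_def by auto
        then show ?thesis using key True by blast
      next
        case False
        have "(1,b,c) \<notin> Z" using False tco_sub[OF Zt] tco_dist[OF Zt] by blast
        moreover have "(1,b,c) \<notin> Zg ?X f" using False unfolding Zg_def cyc3_def f_def by auto
        ultimately show ?thesis by blast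
      qed
    qed
    then show ?thesis using Zfeq by simp
  qed
  have "Cgood s"
    using Rcond[OF n ls] ZR Zfe unfolding R_def by blast
  then have "\<not> cyc_contains s [1,3,2] \<and> \<not> cyc_contains s [2,1,3] \<and> \<not> cyc_contains s [3,2,1]"
    using avoid_Cgood[of s] ls sp n by (simp add: perms_def)
  then have "s \<in> T ?m" using sp s0 unfolding T_def by blast
  then show ?thesis using Zfe by blast
qed

declare upt_Suc[simp]

theorem theorem4p6:
  fixes n :: nat
  assumes "n \<ge> 1"
  shows "card (Av (n + 2)) = card (R n)"
proof -
  have b1: "bij_betw cyc (T (n+2)) (Av (n+2))" by (rule part1) simp
  have b2: "bij_betw (Zf (n+2)) (T (n+2)) (R n)"
    unfolding bij_betw_def
  proof
    show "inj_on (Zf (n+2)) (T (n+2))" by (rule inj2)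
    show "Zf (n+2) ` T (n+2) = R n"
      using T_to_R[OF assms] surj2[OF assms] by blast
  qed
  show ?thesis using bij_betw_same_card[OF b1] bij_betw_same_card[OF b2] by simp
qed

end
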